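(* Let $(x^{(i)},y^{(i)},s^{(i)})$, $i=1,\dots,\ell$, be the weighted centers of $w^{(i)}\in\mathbb R^m_{++}$. Let $\beta_i\in[0,1]$ with $\sum_{i=1}^\ell\beta_i=1$, and fix $j\in\{1,\dots,\ell\}$. Then $\bigl(\sum_i\beta_ix^{(i)},\,y^{(j)},\,\sum_i\beta_is^{(i)}\bigr)$ is the weighted center of $$w:=\sum_{i=1}^\ell\beta_iY^{(j)}(Y^{(i)})^{-1}w^{(i)},$$ and moreover $\sum_{k=1}^m w_k=\sum_{k=1}^m w^{(j)}_k$.
   Context: Let $A\in\mathbb R^{m\times n}$ have full column rank $n\le m$ and $b\in\mathbb R^m$ be such that $\{x:Ax\le b\}$ is bounded with nonempty interior. For $w\in\mathbb R^m_{++}$ the weighted center of $w$ is the unique $(x,y,s)$ with $Ax+s=b$, $s>0$, $A^\top y=0$, $\mathrm{Diag}(s)y=w$. $Y^{(i)}=\mathrm{Diag}(y^{(i)})$. *)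

theory Defs
  imports "HOL-Analysis.Analysis"
begin

definition standing_assms :: "real^'n^'m \<Rightarrow> real^'m \<Rightarrow> bool" where
  "standing_assms A b \<longleftrightarrow> rank A = CARD('n) \<and>
     bounded {x. \<forall>k. (A *v x) $ k \<le> b $ k} \<and>
     interior {x. \<forall>k. (A *v x) $ k \<le> b $ k} \<noteq> {}"

definition is_weighted_center ::
  "real^'n^'m \<Rightarrow> real^'m \<Rightarrow> real^'m \<Rightarrow> real^'n \<Rightarrow> real^'m \<Rightarrow> real^'m \<Rightarrow> bool" where
  "is_weighted_center A b w x y s \<longleftrightarrow>
     (\<forall>k. w $ k > 0) \<and> A *v x + s = b \<and> (\<forall>k. s $ k > 0) \<and>
     transpose A *v y = 0 \<and> (\<forall>k. s $ k * y $ k = w $ k)"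

end

theory Submission
  imports Defs
begin

theorem lemmaA2:
  fixes A :: "real^'n^'m" and b :: "real^'m" and l j :: nat
    and W :: "nat \<Rightarrow> real^'m" and X :: "nat \<Rightarrow> real^'n"
    and Y S :: "nat \<Rightarrow> real^'m" and \<beta> :: "nat \<Rightarrow> real"
  assumes "standing_assms A b"
    and "\<And>i. i \<in> {1..l} \<Longrightarrow> is_weighted_center A b (W i) (X i) (Y i) (S i)"
    and "\<And>i. i \<in> {1..l} \<Longrightarrow> 0 \<le> \<beta> i \<and> \<beta> i \<le> 1"
    and "(\<Sum>i=1..l. \<beta> i) = 1"
    and "j \<in> {1..l}"
  shows "is_weighted_center A b
           (\<Sum>i=1..l. \<beta> i *\<^sub>R (\<chi> k. Y j $ k * W i $ k / Y i $ k))
           (\<Sum>i=1..l. \<beta> i *\<^sub>R X i) (Y j) (\<Sum>i=1..l. \<beta> i *\<^sub>R S i)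
       \<and> (\<Sum>k\<in>UNIV. (\<Sum>i=1..l. \<beta> i *\<^sub>R (\<chi> k. Y j $ k * W i $ k / Y i $ k)) $ k)
         = (\<Sum>k\<in>UNIV. W j $ k)"
proof -
  let ?I = "{1..l::nat}"
  have wc: "\<And>i. i \<in> ?I \<Longrightarrow> (\<forall>k. W i $ k > 0) \<and> A *v X i + S i = b \<and> (\<forall>k. S i $ k > 0) \<and>
     transpose A *v Y i = 0 \<and> (\<forall>k. S i $ k * Y i $ k = W i $ k)"
    using assms(2) unfolding is_weighted_center_def by blast
  have Ypos: "Y i $ k > 0" if "i \<in> ?I" for i k
  proof -
    have "S i $ k * Y i $ k > 0" using wc[OF that] by metis
    thus ?thesis using wc[OF that] by (meson zero_less_mult_pos)
  qed
  have ratio: "W i $ k / Y i $ k = S i $ k" if "i \<in> ?I" for i k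
    using wc[OF that] Ypos[OF that, of k] by (metis nonzero_mult_div_cancel_right order_less_irrefl)
  define Sb where "Sb = (\<Sum>i\<in>?I. \<beta> i *\<^sub>R S i)"
  have wcomp: "(\<Sum>i\<in>?I. \<beta> i *\<^sub>R (\<chi> k. Y j $ k * W i $ k / Y i $ k)) $ k = Y j $ k * Sb $ k" for k
  proof -
    have "(\<Sum>i\<in>?I. \<beta> i *\<^sub>R (\<chi> k. Y j $ k * W i $ k / Y i $ k)) $ k
        = (\<Sum>i\<in>?I. \<beta> i * (Y j $ k * S i $ k))"
      by (auto intro!: sum.cong simp: ratio[symmetric])
    also have "\<dots> = Y j $ k * Sb $ k" unfolding Sb_def
      by (simp add: sum_distrib_left algebra_simps)
    finally show ?thesis .
  qed
  have Sbpos: "Sb $ k > 0" for k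
  proof -
    have "Sb $ k = (\<Sum>i\<in>?I. \<beta> i * S i $ k)" unfolding Sb_def by simp
    moreover have "(\<Sum>i\<in>?I. \<beta> i * S i $ k) > 0"
    proof -
      have ex: "\<exists>i\<in>?I. \<beta> i \<noteq> 0" using assms(4) by (metis sum.neutral zero_neq_one)
      then obtain i0 where i0: "i0 \<in> ?I" "\<beta> i0 \<noteq> 0" by blast
      have "\<beta> i0 * S i0 $ k > 0" using i0 assms(3) wc by (metis less_eq_real_def mult_pos_pos)
      moreover have "\<beta> i0 * S i0 $ k \<le> (\<Sum>i\<in>?I. \<beta> i * S i $ k)"
      proof -
        have nn: "0 \<le> \<beta> x * S x $ k" if "x \<in> ?I" for x
        proof -
          have "0 \<le> \<beta> x" using assms(3)[OF that] by blast
          moreover have "0 < S x $ k" using wc[OF that] by blast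
          ultimately show ?thesis by (rule mult_nonneg_nonneg[OF _ less_imp_le])
        qed
        show ?thesis
          by (rule member_le_sum[OF i0(1)]) (use nn in auto)
      qed
      ultimately show ?thesis by linarith
    qed
    ultimately show ?thesis by simp
  qed
  have Ax: "A *v (\<Sum>i\<in>?I. \<beta> i *\<^sub>R X i) + Sb = b"
  proof -
    have "A *v (\<Sum>i\<in>?I. \<beta> i *\<^sub>R X i) = (\<Sum>i\<in>?I. \<beta> i *\<^sub>R (A *v X i))"
      by (simp add: linear_sum[OF matrix_vector_mul_linear] linear_cmul[OF matrix_vector_mul_linear] o_def)
    hence "A *v (\<Sum>i\<in>?I. \<beta> i *\<^sub>R X i) + Sb = (\<Sum>i\<in>?I. \<beta> i *\<^sub>R (A *v X i + S i))"
      unfolding Sb_def by (simp add: sum.distrib scaleR_right_distrib)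
    also have "\<dots> = (\<Sum>i\<in>?I. \<beta> i *\<^sub>R b)" using wc by (auto intro!: sum.cong)
    also have "\<dots> = b" using assms(4) by (simp add: scaleR_sum_left[symmetric])
    finally show ?thesis .
  qed
  have orth: "inner (Y j) (S i) = inner (Y j) (S j)" if "i \<in> ?I" for i
  proof -
    have e1: "S i = b - A *v X i" using wc[OF that] by (simp add: eq_diff_eq add.commute)
    have e2: "S j = b - A *v X j" using wc[OF assms(5)] by (simp add: eq_diff_eq add.commute)
    have "S i - S j = A *v X j - A *v X i" unfolding e1 e2 by simp
    also have "\<dots> = A *v (X j - X i)" by (simp add: matrix_vector_mult_diff_distrib)
    finally have "S i - S j = A *v (X j - X i)" .
    hence "inner (Y j) (S i - S j) = inner (Y j v* A) (X j - X i)" by (simp add: dot_lmul_matrix)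
    also have "\<dots> = 0" using wc[OF assms(5)] by simp
    finally show ?thesis by (simp add: inner_diff_right)
  qed
  have sumeq: "(\<Sum>k\<in>UNIV. Y j $ k * Sb $ k) = (\<Sum>k\<in>UNIV. W j $ k)"
  proof -
    have "(\<Sum>k\<in>UNIV. Y j $ k * Sb $ k) = inner (Y j) Sb" by (simp add: inner_vec_def)
    also have "\<dots> = (\<Sum>i\<in>?I. \<beta> i * inner (Y j) (S i))" unfolding Sb_def
      by (simp add: inner_sum_right)
    also have "\<dots> = (\<Sum>i\<in>?I. \<beta> i * inner (Y j) (S j))" using orth by (auto intro!: sum.cong)
    also have "\<dots> = inner (Y j) (S j)" using assms(4) by (simp add: sum_distrib_right[symmetric])
    also have "\<dots> = (\<Sum>k\<in>UNIV. W j $ k)" using wc[OF assms(5)]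
      by (simp add: inner_vec_def mult.commute)
    finally show ?thesis .
  qed
  show ?thesis
    unfolding is_weighted_center_def Sb_def[symmetric]
    using wcomp Sbpos Ax sumeq wc[OF assms(5)] Ypos[OF assms(5)]
    by (auto intro!: mult_pos_pos simp: mult.commute)
qed

end
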